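(* Let $h:\{x_1,\dots,x_n\}^*\to\{a_1,\dots,a_k\}^*$ be a solution of rank $n-1$ of both equations $E$ and $E'$, and let $\lambda\in\mathbb Z^n$ have coprime coefficients with $\Gamma_h=\{\mathbf u\in\mathbb Q^n:\lambda\cdot\mathbf u=0\}$. Then for all $j,k\in\{1,\dots,n\}$ the polynomial $t_{jk}^{E,E'}$ is divisible by $\mathbf X^{\lambda^+}-\mathbf X^{\lambda^-}$. In particular, $\mathcal S_E(\beta)$ and $\mathcal S_{E'}(\beta)$ are linearly dependent over $\mathbb Q(x)$ for every $\beta\in\Gamma_h\cap\mathbb N_0^n$.
   Context: An equation is a pair $E=(u,v)$ of words over $\Xi=\{x_1,\dots,x_n\}$; a solution is a morphism $h$ with $h(u)=h(v)$. For $h:\Xi^*\to\{a_1,\dots,a_k\}^*$, $\gamma(h)_i=(|h(x_1)|_{a_i},\dots,|h(x_n)|_{a_i})$, $\Gamma_h$ is the $\mathbb Q$-span of the $\gamma(h)_i$, and the rank of $h$ is $\dim\Gamma_h$. For $E=(x_{i_1}\cdots x_{i_r},\,x_{j_1}\cdots x_{j_s})$ define $S_{E,x_j}=\sum_{a:\,i_a=j}\prod_{t=1}^{a-1}X_{i_t}-\sum_{a:\,j_a=j}\prod_{t=1}^{a-1}X_{j_t}\in\mathbb Z[X_1,\dots,X_n]$ (empty product $=1$), and $t_{jk}^{E,E'}=S_{E,x_j}S_{E',x_k}-S_{E',x_j}S_{E,x_k}$. For $\beta\in\mathbb N_0^n$, $p(\beta)\in\mathbb Z[x]$ is the image of $p$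 under $X_i\mapsto x^{(\beta)_i}$, and $\mathcal S_E(\beta)=(S_{E,x_1}(\beta),\dots,S_{E,x_n}(\beta))\in\mathbb Z[x]^n$. For $\alpha\in\mathbb N_0^n$, $\mathbf X^\alpha=\prod X_i^{(\alpha)_i}$; for $\lambda\in\mathbb Z^n$, $\lambda^\pm\in\mathbb N_0^n$ are the unique vectors with $\lambda=\lambda^+-\lambda^-$, $\lambda^+\cdot\lambda^-=0$; coprime coefficients means gcd of coordinates is $1$. *)

theory Defs
  imports "HOL-Library.Poly_Mapping" "HOL-Computational_Algebra.Polynomial"
    "HOL-Computational_Algebra.Fraction_Field"
begin

text \<open>Variables x_1..x_n are the elements of a finite type 'n; words over the
variables are lists.\<close>

type_synonym 'n equation = "'n list \<times> 'n list"

definition hom_ext :: "('n \<Rightarrow> 'a list) \<Rightarrow> 'n list \<Rightarrow> 'a list" where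
  "hom_ext h w = concat (map h w)"

definition is_solution :: "('n \<Rightarrow> 'a list) \<Rightarrow> 'n equation \<Rightarrow> bool" where
  "is_solution h E \<longleftrightarrow> hom_ext h (fst E) = hom_ext h (snd E)"

definition gamma :: "('n \<Rightarrow> 'a list) \<Rightarrow> 'a \<Rightarrow> ('n \<Rightarrow> rat)" where
  "gamma h a = (\<lambda>i. of_nat (count_list (h i) a))"

definition qspan :: "('n \<Rightarrow> rat) set \<Rightarrow> ('n \<Rightarrow> rat) set" where
  "qspan V = {u. \<exists>A c. finite A \<and> A \<subseteq> V \<and> u = (\<lambda>i. \<Sum>v\<in>A. c v * v i)}"

definition Gamma :: "('n \<Rightarrow> 'a list) \<Rightarrow> ('n \<Rightarrow> rat) set" where
  "Gamma h = qspan (range (gamma h))"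

definition qindep :: "('n \<Rightarrow> rat) set \<Rightarrow> bool" where
  "qindep S \<longleftrightarrow> finite S \<and>
     (\<forall>c. (\<forall>i. (\<Sum>v\<in>S. c v * v i) = 0) \<longrightarrow> (\<forall>v\<in>S. c v = 0))"

definition qdim :: "('n::finite \<Rightarrow> rat) set \<Rightarrow> nat" where
  "qdim W = Max {card S | S. S \<subseteq> W \<and> qindep S}"

definition rank :: "('n::finite \<Rightarrow> 'a list) \<Rightarrow> nat" where
  "rank h = qdim (Gamma h)"

text \<open>Multivariate polynomials Z[X_i : i in 'n] as finitely supported maps
from monomials (exponent vectors 'n =>0 nat) to coefficients.\<close>
type_synonym 'n mpoly = "('n \<Rightarrow>\<^sub>0 nat) \<Rightarrow>\<^sub>0 int"

definition Var :: "'n \<Rightarrow> 'n mpoly" where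
  "Var i = Poly_Mapping.single (Poly_Mapping.single i 1) 1"

definition monomial_X :: "('n::finite \<Rightarrow> nat) \<Rightarrow> 'n mpoly" where
  "monomial_X \<alpha> = (\<Prod>i\<in>UNIV. Var i ^ \<alpha> i)"

definition prefix_prod :: "'n list \<Rightarrow> nat \<Rightarrow> 'n mpoly" where
  "prefix_prod w a = prod_list (map Var (take a w))"

definition S_side :: "'n list \<Rightarrow> 'n \<Rightarrow> 'n mpoly" where
  "S_side w j = (\<Sum>a<length w. if w ! a = j then prefix_prod w a else 0)"

definition S_poly :: "'n equation \<Rightarrow> 'n \<Rightarrow> 'n mpoly" where
  "S_poly E j = S_side (fst E) j - S_side (snd E) j"

definition t_poly :: "'n equation \<Rightarrow> 'n equation \<Rightarrow> 'n \<Rightarrow> 'n \<Rightarrow> 'n mpoly" where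
  "t_poly E E' j k = S_poly E j * S_poly E' k - S_poly E' j * S_poly E k"

text \<open>p(beta): substitute X_i := x^(beta_i).\<close>
definition eval_beta :: "('n::finite \<Rightarrow> nat) \<Rightarrow> 'n mpoly \<Rightarrow> int poly" where
  "eval_beta \<beta> p = (\<Sum>m\<in>Poly_Mapping.keys p.
      monom (Poly_Mapping.lookup p m) (\<Sum>i\<in>UNIV. Poly_Mapping.lookup m i * \<beta> i))"

definition S_vec :: "'n::finite equation \<Rightarrow> ('n \<Rightarrow> nat) \<Rightarrow> ('n \<Rightarrow> int poly)" where
  "S_vec E \<beta> = (\<lambda>j. eval_beta \<beta> (S_poly E j))"

definition to_Qx :: "int poly \<Rightarrow> rat poly fract" where
  "to_Qx p = Fract (map_poly of_int p) 1"

definition lin_dep_Qx :: "('n \<Rightarrow> int poly) \<Rightarrow> ('n \<Rightarrow> int poly) \<Rightarrow> bool" where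
  "lin_dep_Qx v w \<longleftrightarrow> (\<exists>c d :: rat poly fract. (c \<noteq> 0 \<or> d \<noteq> 0) \<and>
      (\<forall>j. c * to_Qx (v j) + d * to_Qx (w j) = 0))"

definition pos_part :: "('n \<Rightarrow> int) \<Rightarrow> ('n \<Rightarrow> nat)" where
  "pos_part l = (\<lambda>i. nat (l i))"

definition neg_part :: "('n \<Rightarrow> int) \<Rightarrow> ('n \<Rightarrow> nat)" where
  "neg_part l = (\<lambda>i. nat (- l i))"

end

theory Submission
  imports Defs
begin


definition degb :: "('n::finite \<Rightarrow> nat) \<Rightarrow> ('n \<Rightarrow>\<^sub>0 nat) \<Rightarrow> nat" where
  "degb \<beta> m = (\<Sum>i\<in>UNIV. Poly_Mapping.lookup m i * \<beta> i)"

lemma ev_superset: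
  assumes "finite K" "Poly_Mapping.keys p \<subseteq> K"
  shows "eval_beta \<beta> p = (\<Sum>m\<in>K. monom (Poly_Mapping.lookup p m) (degb \<beta> m))"
  unfolding eval_beta_def degb_def
  by (rule sum.mono_neutral_left) (use assms in \<open>auto simp: in_keys_iff\<close>)

lemma ev_single: "eval_beta \<beta> (Poly_Mapping.single m c) = monom c (degb \<beta> m)"
  by (subst ev_superset[of "{m}"]) auto

lemma ev_add: "eval_beta \<beta> (p + q) = eval_beta \<beta> p + eval_beta \<beta> q"
proof -
  let ?K = "Poly_Mapping.keys p \<union> Poly_Mapping.keys q"
  have "eval_beta \<beta> (p + q) = (\<Sum>m\<in>?K. monom (Poly_Mapping.lookup (p+q) m) (degb \<beta> m))"
    by (rule ev_superset) (auto simp: keys_add)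
  also have "\<dots> = (\<Sum>m\<in>?K. monom (Poly_Mapping.lookup p m) (degb \<beta> m)) + (\<Sum>m\<in>?K. monom (Poly_Mapping.lookup q m) (degb \<beta> m))"
    by (simp add: lookup_add add_monom[symmetric] sum.distrib)
  also have "\<dots> = eval_beta \<beta> p + eval_beta \<beta> q"
    by (subst (1 2) ev_superset[where K="?K"]) auto
  finally show ?thesis .
qed

lemma ev_uminus: "eval_beta \<beta> (- p) = - eval_beta \<beta> p"
  unfolding eval_beta_def by (simp add: sum_negf[symmetric] minus_monom)

lemma ev_diff: "eval_beta \<beta> (p - q) = eval_beta \<beta> p - eval_beta \<beta> q"
  using ev_add[of \<beta> p "-q"] by (simp add: ev_uminus)

lemma ev_zero[simp]: "eval_beta \<beta> 0 = 0"
  by (simp add: eval_beta_def)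

lemma degb_add: "degb \<beta> (a + b) = degb \<beta> a + degb \<beta> b"
  by (simp add: degb_def lookup_add algebra_simps sum.distrib)

lemma ev_mult_single:
  "eval_beta \<beta> (Poly_Mapping.single x 1 * q) = eval_beta \<beta> (Poly_Mapping.single x 1) * eval_beta \<beta> q"
proof (rule frag_induction[of q UNIV])
  fix y show "eval_beta \<beta> (Poly_Mapping.single x 1 * frag_of y) = eval_beta \<beta> (Poly_Mapping.single x 1) * eval_beta \<beta> (frag_of y)"
    by (simp add: mult_single ev_single degb_add mult_monom)
next
  fix a b :: "('a \<Rightarrow>\<^sub>0 nat) \<Rightarrow>\<^sub>0 int"
  assume "eval_beta \<beta> (Poly_Mapping.single x 1 * a) = eval_beta \<beta> (Poly_Mapping.single x 1) * eval_beta \<beta> a"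
    "eval_beta \<beta> (Poly_Mapping.single x 1 * b) = eval_beta \<beta> (Poly_Mapping.single x 1) * eval_beta \<beta> b"
  then show "eval_beta \<beta> (Poly_Mapping.single x 1 * (a - b)) = eval_beta \<beta> (Poly_Mapping.single x 1) * eval_beta \<beta> (a - b)"
    by (simp add: right_diff_distrib ev_diff)
qed auto

lemma ev_mult: "eval_beta \<beta> (p * q) = eval_beta \<beta> p * eval_beta \<beta> q"
proof (rule frag_induction[of p UNIV])
  fix x show "eval_beta \<beta> (frag_of x * q) = eval_beta \<beta> (frag_of x) * eval_beta \<beta> q"
    by (rule ev_mult_single)
next
  fix a b :: "('a \<Rightarrow>\<^sub>0 nat) \<Rightarrow>\<^sub>0 int"
  assume "eval_beta \<beta> (a * q) = eval_beta \<beta> a * eval_beta \<beta> q"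
    "eval_beta \<beta> (b * q) = eval_beta \<beta> b * eval_beta \<beta> q"
  then show "eval_beta \<beta> ((a - b) * q) = eval_beta \<beta> (a - b) * eval_beta \<beta> q"
    by (simp add: left_diff_distrib ev_diff)
qed auto

lemma ev_one[simp]: "eval_beta \<beta> 1 = 1"
  using ev_single[of \<beta> 0 1] by (simp add: degb_def)

lemma ev_Var: "eval_beta \<beta> (Var i) = monom 1 (\<beta> i)"
  by (simp add: Var_def ev_single degb_def lookup_single when_def if_distrib[of "\<lambda>x. x * _"] cong: if_cong)

lemma ev_sum: "eval_beta \<beta> (sum f A) = (\<Sum>a\<in>A. eval_beta \<beta> (f a))"
  by (induction A rule: infinite_finite_induct) (auto simp: ev_add)

lemma ev_prod_list: "eval_beta \<beta> (prod_list xs) = prod_list (map (eval_beta \<beta>) xs)"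
  by (induction xs) (auto simp: ev_mult)



fun Pw :: "('a \<Rightarrow> nat) \<Rightarrow> 'a \<Rightarrow> 'a list \<Rightarrow> int poly" where
  "Pw w b [] = 0"
| "Pw w b (c # u) = (if c = b then 1 else 0) + monom 1 (w c) * Pw w b u"

definition wt :: "('a \<Rightarrow> nat) \<Rightarrow> 'a list \<Rightarrow> nat" where
  "wt w u = sum_list (map w u)"

lemma Pw_append: "Pw w b (u @ v) = Pw w b u + monom 1 (wt w u) * Pw w b v"
  by (induction u) (auto simp: wt_def algebra_simps mult_monom)

lemma Pw_at1: "poly (Pw w b u) 1 = int (count_list u b)"
  by (induction u) (auto simp: poly_monom)

lemma prefix_prod_Cons0: "prefix_prod (x # U) 0 = 1"
  by (simp add: prefix_prod_def)

lemma prefix_prod_Cons_Suc: "prefix_prod (x # U) (Suc a) = Var x * prefix_prod U a"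
  by (simp add: prefix_prod_def)

lemma S_side_Cons: "S_side (x # U) j = (if x = j then 1 else 0) + Var x * S_side U j"
proof -
  have "S_side (x # U) j = (\<Sum>a<Suc (length U). if (x # U) ! a = j then prefix_prod (x # U) a else 0)"
    by (simp add: S_side_def)
  also have "\<dots> = (if x = j then 1 else 0) + (\<Sum>a<length U. if U ! a = j then Var x * prefix_prod U a else 0)"
  proof -
    have e: "(\<Sum>i<length U. if U ! i = j then prefix_prod (x # U) (Suc i) else 0) =
     (\<Sum>a<length U. if U ! a = j then Var x * prefix_prod U a else 0)"
      unfolding prefix_prod_def by (rule sum.cong) simp_all
    show ?thesis by (subst sum.lessThan_Suc_shift) (simp add: prefix_prod_Cons0 e)
  qed
  also have "\<dots> = (if x = j then 1 else 0) + Var x * S_side U j"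
    by (simp add: S_side_def sum_distrib_left if_distrib[of "\<lambda>t. Var x * t"] cong: if_cong)
  finally show ?thesis .
qed

lemma S_side_Nil: "S_side [] j = 0"
  by (simp add: S_side_def)

lemma hom_ext_Cons: "hom_ext h (x # U) = h x @ hom_ext h U"
  by (simp add: hom_ext_def)

lemma word_key:
  fixes h :: "'n::finite \<Rightarrow> 'a list"
  shows "(\<Sum>j\<in>UNIV. eval_beta (\<lambda>i. wt w (h i)) (S_side U j) * Pw w b (h j)) = Pw w b (hom_ext h U)"
proof (induction U)
  case Nil then show ?case by (simp add: S_side_Nil hom_ext_def)
next
  case (Cons x U)
  have d: "\<And>j. Pw w b (h j) * eval_beta (\<lambda>i. wt w (h i)) (if x = j then 1 else 0) = (if x = j then Pw w b (h j) else 0)" by simp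
  have "(\<Sum>j\<in>UNIV. eval_beta (\<lambda>i. wt w (h i)) (S_side (x # U) j) * Pw w b (h j))
     = (\<Sum>j\<in>UNIV. (if x = j then Pw w b (h j) else 0)) + monom 1 (wt w (h x)) *
        (\<Sum>j\<in>UNIV. eval_beta (\<lambda>i. wt w (h i)) (S_side U j) * Pw w b (h j))"
    by (simp add: S_side_Cons ev_add ev_mult ev_Var algebra_simps sum.distrib sum_distrib_left
        d)
  also have "\<dots> = Pw w b (hom_ext h (x # U))"
  proof -
    have d: "\<And>j. Pw w b (h j) * (if x = j then 1 else 0) = (if x = j then Pw w b (h j) else 0)" by simp
    show ?thesis by (simp add: Cons hom_ext_Cons Pw_append d)
  qed
  finally show ?case .
qed

lemma sol_key:
  fixes h :: "'n::finite \<Rightarrow> 'a list"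
  assumes "is_solution h E"
  shows "(\<Sum>j\<in>UNIV. S_vec E (\<lambda>i. wt w (h i)) j * Pw w b (h j)) = 0"
  using assms word_key[of w h "fst E" b] word_key[of w h "snd E" b]
  by (simp add: S_vec_def S_poly_def ev_diff algebra_simps sum_subtractf is_solution_def)



lemma perp:
  fixes h :: "'n::finite \<Rightarrow> 'a list" and lam :: "'n \<Rightarrow> int" and z :: "'n \<Rightarrow> rat"
  assumes G: "Gamma h = {u. (\<Sum>i\<in>UNIV. of_int (lam i) * u i) = 0}"
    and z: "\<And>a. (\<Sum>i\<in>UNIV. z i * gamma h a i) = 0"
  shows "of_int (lam l) * z m = of_int (lam m) * z l"
proof -
  define u :: "'n \<Rightarrow> rat" where "u = (\<lambda>i. (if i = m then of_int (lam l) else 0) - (if i = l then of_int (lam m) else 0))"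
  have su: "(\<Sum>i\<in>UNIV. q i * u i) = q m * of_int (lam l) - q l * of_int (lam m)" for q :: "'n \<Rightarrow> rat"
    by (simp add: u_def right_diff_distrib sum_subtractf if_distrib[of "\<lambda>t. q _ * t"] cong: if_cong)
  have "u \<in> Gamma h" unfolding G using su[of "\<lambda>i. of_int (lam i)"] by simp
  then obtain A c where A: "finite A" "A \<subseteq> range (gamma h)" and uA: "u = (\<lambda>i. \<Sum>v\<in>A. c v * v i)"
    unfolding Gamma_def qspan_def by blast
  have "(\<Sum>i\<in>UNIV. z i * u i) = (\<Sum>v\<in>A. c v * (\<Sum>i\<in>UNIV. z i * v i))"
    unfolding uA by (simp add: sum_distrib_left sum_distrib_right mult_ac sum.swap[of _ UNIV A])
  also have "\<dots> = 0"
    using A(2) z by (intro sum.neutral) auto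
  finally show ?thesis using su[of z] by (simp add: mult_ac)
qed

lemma kerzero:
  fixes h :: "'n::finite \<Rightarrow> 'a list" and lam :: "'n \<Rightarrow> int" and y :: "'n \<Rightarrow> int poly"
  assumes G: "Gamma h = {u. (\<Sum>i\<in>UNIV. of_int (lam i) * u i) = 0}"
    and ll: "lam l \<noteq> 0"
    and ker: "\<And>b. (\<Sum>j\<in>UNIV. Pw w b (h j) * y j) = 0"
    and yl: "y l = 0"
  shows "y j = 0"
proof (rule ccontr)
  assume nz: "y j \<noteq> 0"
  define J where "J = {j. y j \<noteq> 0}"
  have "J \<noteq> {}" "finite J" using nz by (auto simp: J_def)
  define e where "e = Min ((\<lambda>j. order 1 (y j)) ` J)"
  have "e \<in> (\<lambda>j. order 1 (y j)) ` J"
    unfolding e_def using \<open>J \<noteq> {}\<close> \<open>finite J\<close> by (intro Min_in) auto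
  then obtain j0 where j0: "j0 \<in> J" "e = order 1 (y j0)" by auto
  define q :: "int poly" where "q = [:-1, 1:] ^ e"
  have qnz: "q \<noteq> 0" by (simp add: q_def)
  have qd: "q dvd y i" for i
  proof (cases "i \<in> J")
    case True
    then have "e \<le> order 1 (y i)" unfolding e_def using \<open>finite J\<close> by auto
    then have "q dvd [:-1,1:] ^ order 1 (y i)" unfolding q_def by (rule le_imp_power_dvd)
    also have "\<dots> dvd y i" using order_1[of 1 "y i"] by simp
    finally show ?thesis .
  next
    case False then show ?thesis by (simp add: J_def)
  qed
  define y' where "y' i = y i div q" for i
  have yy: "y i = q * y' i" for i using qd[of i] by (simp add: y'_def)
  have ker': "(\<Sum>j\<in>UNIV. Pw w b (h j) * y' j) = 0" for b
  proof -
    have "q * (\<Sum>j\<in>UNIV. Pw w b (h j) * y' j) = 0"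
      using ker[of b] by (simp add: yy sum_distrib_left mult_ac)
    then show ?thesis using qnz by simp
  qed
  define z where "z i = poly (y' i) 1" for i
  have zj0: "z j0 \<noteq> 0"
  proof
    assume "z j0 = 0"
    then have "poly (y' j0) 1 = 0" by (simp add: z_def)
    moreover have "y' j0 \<noteq> 0" using j0(1) yy[of j0] by (auto simp: J_def)
    ultimately have "order 1 (y' j0) \<noteq> 0" by (simp add: order_root)
    moreover have "order 1 (y j0) = order 1 q + order 1 (y' j0)"
      using yy[of j0] j0(1) by (simp add: J_def order_mult)
    moreover have "order 1 q = e" unfolding q_def by (simp add: order_power_n_n)
    ultimately show False using j0(2) by simp
  qed
  have zl: "z l = 0" using yy[of l] yl qnz by (simp add: z_def)
  have zker: "(\<Sum>i\<in>UNIV. of_int (z i) * gamma h a i) = 0" for a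
  proof -
    have "poly (\<Sum>j\<in>UNIV. Pw w a (h j) * y' j) 1 = 0" using ker'[of a] by simp
    then have "(\<Sum>j\<in>UNIV. int (count_list (h j) a) * z j) = 0"
      by (simp add: poly_sum Pw_at1 z_def)
    then have "(of_int (\<Sum>j\<in>UNIV. int (count_list (h j) a) * z j) :: rat) = 0" by simp
    then show ?thesis by (simp add: gamma_def mult_ac)
  qed
  have "of_int (lam l) * of_int (z j0) = (of_int (lam j0) * of_int (z l) :: rat)"
    by (rule perp[OF G zker])
  then show False using zl zj0 ll by simp
qed

lemma minors:
  fixes h :: "'n::finite \<Rightarrow> 'a list" and lam :: "'n \<Rightarrow> int" and s s' :: "'n \<Rightarrow> int poly"
  assumes G: "Gamma h = {u. (\<Sum>i\<in>UNIV. of_int (lam i) * u i) = 0}"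
    and ll: "lam l \<noteq> 0"
    and ks: "\<And>b. (\<Sum>j\<in>UNIV. Pw w b (h j) * s j) = 0"
    and ks': "\<And>b. (\<Sum>j\<in>UNIV. Pw w b (h j) * s' j) = 0"
  shows "s j * s' k = s' j * s k"
proof (cases "s l = 0")
  case True
  then have "s i = 0" for i by (rule kerzero[OF G ll ks])
  then show ?thesis by simp
next
  case False
  define y where "y i = s l * s' i - s' l * s i" for i
  have "(\<Sum>j\<in>UNIV. Pw w b (h j) * y j) = 0" for b
  proof -
    have "(\<Sum>j\<in>UNIV. Pw w b (h j) * y j) = s l * (\<Sum>j\<in>UNIV. Pw w b (h j) * s' j) - s' l * (\<Sum>j\<in>UNIV. Pw w b (h j) * s j)"
      by (simp add: y_def sum_distrib_left right_diff_distrib sum_subtractf mult_ac)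
    then show ?thesis using ks ks' by simp
  qed
  moreover have "y l = 0" by (simp add: y_def)
  ultimately have y0: "y i = 0" for i by (rule kerzero[OF G ll])
  have "s l * (s j * s' k - s' j * s k) = 0"
    using y0[of j] y0[of k] by (simp add: y_def algebra_simps)
  then show ?thesis using False by simp
qed



lemma Var_power: "Var i ^ k = Poly_Mapping.single (Poly_Mapping.single i k) 1"
  by (induction k) (simp_all add: Var_def mult_single single_add[symmetric] add.commute)

lemma prod_single1: "finite A \<Longrightarrow> (\<Prod>i\<in>A. Poly_Mapping.single (g i) (1::int)) = Poly_Mapping.single (\<Sum>i\<in>A. g i) 1"
  by (induction A rule: finite_induct) (simp_all add: mult_single)

lemma monomial_X_single:
  fixes \<alpha> :: "'n::finite \<Rightarrow> nat"
  shows "monomial_X \<alpha> = Poly_Mapping.single (Abs_poly_mapping \<alpha>) 1"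
proof -
  have "(\<Sum>i\<in>UNIV. Poly_Mapping.single i (\<alpha> i)) = Abs_poly_mapping \<alpha>"
    by (rule poly_mapping_eqI) (simp add: lookup_sum lookup_single when_def)
  then show ?thesis unfolding monomial_X_def Var_power by (simp add: prod_single1)
qed

lemma monomial_X_lookup:
  fixes m :: "'n::finite \<Rightarrow>\<^sub>0 nat"
  shows "monomial_X (Poly_Mapping.lookup m) = Poly_Mapping.single m 1"
  by (simp add: monomial_X_single)

lemma monomial_X_add:
  fixes a b :: "'n::finite \<Rightarrow> nat"
  shows "monomial_X (\<lambda>i. a i + b i) = monomial_X a * monomial_X b"
  unfolding monomial_X_def by (simp add: power_add prod.distrib)

lemma ev_monomial_X:
  fixes \<alpha> \<beta> :: "'n::finite \<Rightarrow> nat"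
  shows "eval_beta \<beta> (monomial_X \<alpha>) = monom 1 (\<Sum>i\<in>UNIV. \<alpha> i * \<beta> i)"
  by (simp add: monomial_X_single ev_single degb_def)

lemma binom_dvd_step:
  fixes lam :: "'n::finite \<Rightarrow> int" and \<alpha> \<alpha>' :: "'n \<Rightarrow> nat"
  assumes "\<And>i. int (\<alpha> i) = int (\<alpha>' i) + lam i"
  shows "(monomial_X (pos_part lam) - monomial_X (neg_part lam)) dvd (monomial_X \<alpha> - monomial_X \<alpha>')"
proof -
  define g where "g i = nat (int (\<alpha>' i) - int (neg_part lam i))" for i
  have "\<alpha> i = g i + pos_part lam i \<and> \<alpha>' i = g i + neg_part lam i" for i
    using assms[of i] unfolding g_def pos_part_def neg_part_def by (cases "lam i \<ge> 0") auto
  then have a: "\<alpha> = (\<lambda>i. g i + pos_part lam i)" and a': "\<alpha>' = (\<lambda>i. g i + neg_part lam i)"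
    by auto
  have "monomial_X \<alpha> - monomial_X \<alpha>' = monomial_X g * (monomial_X (pos_part lam) - monomial_X (neg_part lam))"
    by (subst a, subst a') (simp add: monomial_X_add right_diff_distrib)
  then show ?thesis by simp
qed

lemma binom_dvd_nat:
  fixes lam :: "'n::finite \<Rightarrow> int" and \<alpha> \<alpha>' :: "'n \<Rightarrow> nat"
  assumes "\<And>i. int (\<alpha> i) = int (\<alpha>' i) + int k * lam i"
  shows "(monomial_X (pos_part lam) - monomial_X (neg_part lam)) dvd (monomial_X \<alpha> - monomial_X \<alpha>')"
  using assms
proof (induction k arbitrary: \<alpha>)
  case 0
  then have "\<alpha> = \<alpha>'" by (auto simp: fun_eq_iff)
  then show ?case by simp
next
  case (Suc k)
  define \<alpha>'' where "\<alpha>'' i = nat (int (\<alpha>' i) + int k * lam i)" for i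
  have nn: "int (\<alpha>' i) + int k * lam i \<ge> 0" for i
  proof (cases "lam i \<ge> 0")
    case True then show ?thesis by simp
  next
    case False
    have "int (\<alpha> i) = int (\<alpha>' i) + int k * lam i + lam i" using Suc.prems[of i] by (simp add: algebra_simps)
    then show ?thesis using False by linarith
  qed
  have a'': "int (\<alpha>'' i) = int (\<alpha>' i) + int k * lam i" for i using nn[of i] by (simp add: \<alpha>''_def)
  have d1: "(monomial_X (pos_part lam) - monomial_X (neg_part lam)) dvd (monomial_X \<alpha>'' - monomial_X \<alpha>')"
    by (rule Suc.IH) (rule a'')
  have d2: "(monomial_X (pos_part lam) - monomial_X (neg_part lam)) dvd (monomial_X \<alpha> - monomial_X \<alpha>'')"
    by (rule binom_dvd_step) (use Suc.prems a'' in \<open>simp add: algebra_simps\<close>)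
  have "monomial_X \<alpha> - monomial_X \<alpha>' = (monomial_X \<alpha> - monomial_X \<alpha>'') + (monomial_X \<alpha>'' - monomial_X \<alpha>')"
    by simp
  then show ?case using d1 d2 by (metis dvd_add)
qed

lemma binom_dvd:
  fixes lam :: "'n::finite \<Rightarrow> int" and \<alpha> \<alpha>' :: "'n \<Rightarrow> nat"
  assumes "\<And>i. int (\<alpha> i) - int (\<alpha>' i) = c * lam i"
  shows "(monomial_X (pos_part lam) - monomial_X (neg_part lam)) dvd (monomial_X \<alpha> - monomial_X \<alpha>')"
proof (cases "c \<ge> 0")
  case True
  then show ?thesis using assms
    by (intro binom_dvd_nat[of _ _ "nat c"]) (simp add: algebra_simps)
next
  case False
  have "(monomial_X (pos_part lam) - monomial_X (neg_part lam)) dvd (monomial_X \<alpha>' - monomial_X \<alpha>)"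
    using assms False by (intro binom_dvd_nat[of _ _ "nat (- c)"]) (simp add: algebra_simps)
  then show ?thesis by (metis dvd_minus_iff minus_diff_eq)
qed



lemma lam_nonzero:
  fixes lam :: "'n \<Rightarrow> int"
  assumes "Gcd (range lam) = 1"
  obtains l where "lam l \<noteq> 0"
proof -
  have "\<exists>l. lam l \<noteq> 0"
  proof (rule ccontr)
    assume "\<not> ?thesis"
    then have "range lam = {0}" by auto
    then show False using assms by simp
  qed
  then show ?thesis using that by blast
qed

lemma lattice:
  fixes h :: "'n::finite \<Rightarrow> 'a list" and lam :: "'n \<Rightarrow> int" and \<alpha> \<alpha>' :: "'n \<Rightarrow> nat"
  assumes G: "Gamma h = {u. (\<Sum>i\<in>UNIV. of_int (lam i) * u i) = 0}"
    and gcd: "Gcd (range lam) = 1" and ll: "lam l \<noteq> 0"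
    and eq: "\<And>a. (\<Sum>i\<in>UNIV. \<alpha> i * count_list (h i) a) = (\<Sum>i\<in>UNIV. \<alpha>' i * count_list (h i) a)"
  shows "\<exists>c. \<forall>i. int (\<alpha> i) - int (\<alpha>' i) = c * lam i"
proof -
  define d where "d i = int (\<alpha> i) - int (\<alpha>' i)" for i
  have z: "(\<Sum>i\<in>UNIV. of_int (d i) * gamma h a i) = 0" for a
  proof -
    have "(of_nat (\<Sum>i\<in>UNIV. \<alpha> i * count_list (h i) a) :: rat) = of_nat (\<Sum>i\<in>UNIV. \<alpha>' i * count_list (h i) a)"
      using eq[of a] by simp
    then show ?thesis by (simp add: d_def gamma_def left_diff_distrib sum_subtractf)
  qed
  have rel: "lam l * d m = lam m * d l" for m
  proof -
    have "(of_int (lam l) * of_int (d m) :: rat) = of_int (lam m) * of_int (d l)"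
      by (rule perp[OF G z])
    then show ?thesis by (metis of_int_eq_iff of_int_mult)
  qed
  have "lam l dvd Gcd ((*) (d l) ` range lam)"
  proof (rule Gcd_greatest)
    fix x assume "x \<in> (*) (d l) ` range lam"
    then obtain m where "x = d l * lam m" by auto
    then have "x = lam l * d m" using rel[of m] by (simp add: mult.commute)
    then show "lam l dvd x" by simp
  qed
  then have "lam l dvd d l" by (simp add: Gcd_mult gcd)
  then obtain c where c: "d l = lam l * c" by (auto elim: dvdE)
  have "d m = c * lam m" for m
  proof -
    have "lam l * d m = lam l * (c * lam m)" using rel[of m] c by (simp add: mult_ac)
    then show ?thesis using ll by simp
  qed
  then show ?thesis by (auto simp: d_def)
qed

lemma wt_count:
  assumes "set u \<subseteq> L" "finite L"
  shows "wt w u = (\<Sum>a\<in>L. w a * count_list u a)"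
  using assms
proof (induction u)
  case Nil then show ?case by (simp add: wt_def)
next
  case (Cons c u)
  have e: "\<And>a. w a * count_list (c # u) a = w a * count_list u a + (if a = c then w a else 0)" by auto
  have "(\<Sum>a\<in>L. w a * count_list (c # u) a) = (\<Sum>a\<in>L. w a * count_list u a) + (\<Sum>a\<in>L. if a = c then w a else 0)"
    by (simp only: e sum.distrib)
  also have "(\<Sum>a\<in>L. if a = c then w a else 0) = w c" using Cons.prems by (simp add: sum.delta')
  finally show ?case using Cons by (simp add: wt_def)
qed

definition Gv :: "('n::finite \<Rightarrow> 'a list) \<Rightarrow> ('n \<Rightarrow>\<^sub>0 nat) \<Rightarrow> 'a \<Rightarrow> nat" where
  "Gv h m a = (\<Sum>i\<in>UNIV. Poly_Mapping.lookup m i * count_list (h i) a)"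

lemma weight_exists:
  fixes h :: "'n::finite \<Rightarrow> 'a list" and K :: "('n \<Rightarrow>\<^sub>0 nat) set"
  assumes "finite K"
  shows "\<exists>w. \<forall>m\<in>K. \<forall>m'\<in>K. degb (\<lambda>i. wt w (h i)) m = degb (\<lambda>i. wt w (h i)) m' \<longrightarrow> Gv h m = Gv h m'"
proof -
  define L where "L = (\<Union>i. set (h i))"
  have fL: "finite L" by (simp add: L_def)
  obtain idx :: "'a \<Rightarrow> nat" where idx: "inj_on idx L"
    using finite_imp_inj_to_nat_seg[OF fL] by blast
  have GvL: "a \<notin> L \<Longrightarrow> Gv h m a = 0" for m a
    by (simp add: Gv_def L_def count_list_0_iff)
  define D where "D = {(m, m'). m \<in> K \<and> m' \<in> K \<and> Gv h m \<noteq> Gv h m'}"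
  have "D \<subseteq> K \<times> K" by (auto simp: D_def)
  then have fD: "finite D" using assms by (meson finite_SigmaI finite_subset)
  define Q where "Q = (\<lambda>(m, m'). (\<Sum>a\<in>L. monom (int (Gv h m a) - int (Gv h m' a)) (idx a) :: int poly))"
  have Qnz: "Q p \<noteq> 0" if pD: "p \<in> D" for p
  proof -
    obtain m m' where p: "p = (m, m')" "Gv h m \<noteq> Gv h m'" using pD by (auto simp: D_def)
    then obtain a where a: "Gv h m a \<noteq> Gv h m' a" by auto
    then have aL: "a \<in> L" using GvL by force
    have "coeff (Q p) (idx a) = (\<Sum>b\<in>L. if idx b = idx a then int (Gv h m b) - int (Gv h m' b) else 0)"
      by (simp add: Q_def p coeff_sum coeff_monom)
    also have "\<dots> = (\<Sum>b\<in>L. if b = a then int (Gv h m b) - int (Gv h m' b) else 0)"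
      by (rule sum.cong) (use idx aL in \<open>auto dest: inj_onD\<close>)
    also have "\<dots> = int (Gv h m a) - int (Gv h m' a)" using aL fL by (simp add: sum.delta'[of L a])
    finally have "coeff (Q p) (idx a) \<noteq> 0" using a by simp
    then show ?thesis by auto
  qed
  define R where "R = (\<Prod>p\<in>D. Q p)"
  have Rnz: "R \<noteq> 0" using Qnz fD by (simp add: R_def)
  have "finite {x. poly R x = 0}" by (rule poly_roots_finite[OF Rnz])
  then have "finite {s::nat. poly R (int s) = 0}"
  proof -
    assume f: "finite {x. poly R x = 0}"
    have "{s::nat. poly R (int s) = 0} = int -` {x. poly R x = 0}" by auto
    then show ?thesis using finite_vimageI[OF f, of int] by (simp add: inj_on_def)
  qed
  then obtain s :: nat where s: "poly R (int s) \<noteq> 0"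
    using ex_new_if_finite[OF infinite_UNIV_nat] by auto
  define w where "w a = (if a \<in> L then s ^ idx a else 0)" for a
  have deg: "degb (\<lambda>i. wt w (h i)) m = (\<Sum>a\<in>L. w a * Gv h m a)" for m
  proof -
    have "degb (\<lambda>i. wt w (h i)) m = (\<Sum>i\<in>UNIV. Poly_Mapping.lookup m i * (\<Sum>a\<in>L. w a * count_list (h i) a))"
      unfolding degb_def by (rule sum.cong) (auto simp: L_def intro!: wt_count)
    also have "\<dots> = (\<Sum>a\<in>L. w a * Gv h m a)"
      by (simp add: Gv_def sum_distrib_left sum.swap[of _ L] mult_ac)
    finally show ?thesis .
  qed
  have "\<forall>m\<in>K. \<forall>m'\<in>K. degb (\<lambda>i. wt w (h i)) m = degb (\<lambda>i. wt w (h i)) m' \<longrightarrow> Gv h m = Gv h m'"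
  proof (intro ballI impI, rule ccontr)
    fix m m' assume mK: "m \<in> K" "m' \<in> K" and eq: "degb (\<lambda>i. wt w (h i)) m = degb (\<lambda>i. wt w (h i)) m'"
      and ne: "Gv h m \<noteq> Gv h m'"
    then have pD: "(m, m') \<in> D" by (simp add: D_def)
    have "poly (Q (m, m')) (int s) = (\<Sum>a\<in>L. (int (Gv h m a) - int (Gv h m' a)) * int s ^ idx a)"
      by (simp add: Q_def poly_sum poly_monom)
    also have "\<dots> = int (\<Sum>a\<in>L. w a * Gv h m a) - int (\<Sum>a\<in>L. w a * Gv h m' a)"
      by (simp add: w_def of_nat_sum sum_subtractf[symmetric] algebra_simps)
    also have "\<dots> = 0" using eq by (simp add: deg)
    finally have "poly (Q (m, m')) (int s) = 0" .
    then have "poly R (int s) = 0" unfolding R_def poly_prod using fD pD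
      by (auto intro: prod_zero)
    then show False using s by simp
  qed
  then show ?thesis by blast
qed



lemma single_of_int_mult: "(of_int c :: ('n \<Rightarrow>\<^sub>0 nat) \<Rightarrow>\<^sub>0 int) * Poly_Mapping.single m 1 = Poly_Mapping.single m c"
proof -
  have "(of_int c :: ('n \<Rightarrow>\<^sub>0 nat) \<Rightarrow>\<^sub>0 int) = Poly_Mapping.single 0 c"
    by (rule poly_mapping_eqI) (simp add: lookup_of_int lookup_single when_def eq_commute)
  then show ?thesis by (simp add: mult_single)
qed

lemma expand_mpoly:
  fixes p :: "('n \<Rightarrow>\<^sub>0 nat) \<Rightarrow>\<^sub>0 int"
  shows "p = (\<Sum>m\<in>Poly_Mapping.keys p. of_int (Poly_Mapping.lookup p m) * Poly_Mapping.single m 1)"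
proof (rule poly_mapping_eqI)
  fix k
  show "Poly_Mapping.lookup p k = Poly_Mapping.lookup (\<Sum>m\<in>Poly_Mapping.keys p. of_int (Poly_Mapping.lookup p m) * Poly_Mapping.single m 1) k"
    by (simp add: single_of_int_mult lookup_sum lookup_single when_def in_keys_iff)
qed

lemma divisible:
  fixes h :: "'n::finite \<Rightarrow> 'a list" and lam :: "'n \<Rightarrow> int" and p :: "'n mpoly"
  assumes G: "Gamma h = {u. (\<Sum>i\<in>UNIV. of_int (lam i) * u i) = 0}"
    and gcd: "Gcd (range lam) = 1"
    and ev: "\<And>w. eval_beta (\<lambda>i. wt w (h i)) p = 0"
  shows "(monomial_X (pos_part lam) - monomial_X (neg_part lam)) dvd p"
proof -
  let ?B = "monomial_X (pos_part lam) - monomial_X (neg_part lam)"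
  obtain l where ll: "lam l \<noteq> 0" using lam_nonzero[OF gcd] by blast
  obtain w where w: "\<forall>m\<in>Poly_Mapping.keys p. \<forall>m'\<in>Poly_Mapping.keys p.
      degb (\<lambda>i. wt w (h i)) m = degb (\<lambda>i. wt w (h i)) m' \<longrightarrow> Gv h m = Gv h m'"
    using weight_exists[of "Poly_Mapping.keys p" h] by auto
  define deg where "deg = degb (\<lambda>i. wt w (h i))"
  define c where "c m = Poly_Mapping.lookup p m" for m
  have csum: "(\<Sum>m\<in>Poly_Mapping.keys p. if deg m = e then c m else 0) = 0" for e
  proof -
    have "coeff (eval_beta (\<lambda>i. wt w (h i)) p) e = 0" using ev by simp
    then show ?thesis unfolding c_def deg_def
      by (simp add: ev_superset[of "Poly_Mapping.keys p"] coeff_sum coeff_monom)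
  qed
  define r where "r e = (SOME m. m \<in> Poly_Mapping.keys p \<and> deg m = e)" for e
  have rp: "r (deg m) \<in> Poly_Mapping.keys p \<and> deg (r (deg m)) = deg m" if "m \<in> Poly_Mapping.keys p" for m
    unfolding r_def by (rule someI[of _ m]) (use that in simp)
  define S1 where "S1 = (\<Sum>m\<in>Poly_Mapping.keys p. of_int (c m) * (Poly_Mapping.single m 1 - Poly_Mapping.single (r (deg m)) 1) :: 'n mpoly)"
  define S2 where "S2 = (\<Sum>m\<in>Poly_Mapping.keys p. of_int (c m) * Poly_Mapping.single (r (deg m)) 1 :: 'n mpoly)"
  have pS: "p = S1 + S2"
    by (subst expand_mpoly) (simp add: S1_def S2_def c_def right_diff_distrib sum_subtractf)
  have "S2 = (\<Sum>e\<in>deg ` Poly_Mapping.keys p. \<Sum>m\<in>{x \<in> Poly_Mapping.keys p. deg x = e}. of_int (c m) * Poly_Mapping.single (r (deg m)) 1)"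
    unfolding S2_def by (rule sum.image_gen) simp
  also have "\<dots> = (\<Sum>e\<in>deg ` Poly_Mapping.keys p. of_int (\<Sum>m\<in>{x \<in> Poly_Mapping.keys p. deg x = e}. c m) * Poly_Mapping.single (r e) 1)"
    by (rule sum.cong) (simp_all add: sum_distrib_right)
  also have "\<dots> = 0"
  proof (rule sum.neutral, rule ballI)
    fix e
    have "(\<Sum>m\<in>{x \<in> Poly_Mapping.keys p. deg x = e}. c m) = 0"
      using csum[of e] by (simp add: sum.inter_filter)
    then show "of_int (\<Sum>m\<in>{x \<in> Poly_Mapping.keys p. deg x = e}. c m) * Poly_Mapping.single (r e) 1 = (0 :: 'n mpoly)"
      by simp
  qed
  finally have S2: "S2 = 0" .
  have "?B dvd S1"
    unfolding S1_def
  proof (rule dvd_sum, rule dvd_mult)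
    fix m assume m: "m \<in> Poly_Mapping.keys p"
    let ?m' = "r (deg m)"
    have r1: "?m' \<in> Poly_Mapping.keys p" and r2: "deg ?m' = deg m" using rp[OF m] by auto
    have gv: "Gv h m = Gv h ?m'" using bspec[OF bspec[OF w m] r1] r2 unfolding deg_def by simp
    have eq: "(\<Sum>i\<in>UNIV. Poly_Mapping.lookup m i * count_list (h i) a) = (\<Sum>i\<in>UNIV. Poly_Mapping.lookup ?m' i * count_list (h i) a)" for a
      using fun_cong[OF gv, of a] unfolding Gv_def .
    obtain k where "\<forall>i. int (Poly_Mapping.lookup m i) - int (Poly_Mapping.lookup ?m' i) = k * lam i"
      using lattice[OF G gcd ll eq] by blast
    then have "?B dvd monomial_X (Poly_Mapping.lookup m) - monomial_X (Poly_Mapping.lookup ?m')"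
      by (intro binom_dvd) auto
    then show "?B dvd Poly_Mapping.single m 1 - Poly_Mapping.single ?m' 1"
      by (simp add: monomial_X_lookup)
  qed
  then show ?thesis using pS S2 by simp
qed



lemma map_poly_of_int_mult: "map_poly (of_int :: int \<Rightarrow> rat) (a * b) = map_poly of_int a * map_poly of_int b"
  by (rule poly_eqI) (simp add: coeff_map_poly coeff_mult of_int_sum)

lemma to_Qx_mult: "to_Qx (a * b) = to_Qx a * to_Qx b"
  by (simp add: to_Qx_def map_poly_of_int_mult mult_fract)

lemma to_Qx_zero_iff: "to_Qx p = 0 \<longleftrightarrow> p = 0"
proof
  assume "to_Qx p = 0"
  then have "Fract (map_poly (of_int :: int \<Rightarrow> rat) p) 1 = Fract 0 1"
    by (simp add: to_Qx_def fract_collapse)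
  then have "map_poly (of_int :: int \<Rightarrow> rat) p = 0" by (simp add: eq_fract)
  then show "p = 0" by (subst (asm) map_poly_eq_0_iff) auto
qed (simp add: to_Qx_def fract_collapse)

lemma lin_dep_from_minors:
  fixes v w :: "'n \<Rightarrow> int poly"
  assumes m: "\<And>j k. v j * w k = w j * v k"
  shows "lin_dep_Qx v w"
proof (cases "\<forall>j. v j = 0")
  case True
  then show ?thesis unfolding lin_dep_Qx_def
    by (intro exI[of _ 1] exI[of _ 0]) (simp add: to_Qx_zero_iff)
next
  case False
  then obtain l where l: "v l \<noteq> 0" by auto
  have c1: "to_Qx (w l) \<noteq> 0 \<or> - to_Qx (v l) \<noteq> 0" using l by (simp add: to_Qx_zero_iff)
  have c2: "to_Qx (w l) * to_Qx (v j) + - to_Qx (v l) * to_Qx (w j) = 0" for j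
  proof -
    have "w l * v j = v l * w j" using m[of j l] by (simp add: mult_ac)
    then have "to_Qx (w l) * to_Qx (v j) = to_Qx (v l) * to_Qx (w j)" by (simp flip: to_Qx_mult)
    then show ?thesis by simp
  qed
  show ?thesis unfolding lin_dep_Qx_def using c1 c2 by blast
qed

theorem lemma3p9:
  fixes h :: "'n::finite \<Rightarrow> 'a list"
    and E E' :: "'n equation"
    and lam :: "'n \<Rightarrow> int"
  assumes "is_solution h E" and "is_solution h E'"
    and "rank h = card (UNIV :: 'n set) - 1"
    and "Gcd (range lam) = 1"
    and "Gamma h = {u. (\<Sum>i\<in>UNIV. of_int (lam i) * u i) = 0}"
  shows "(\<forall>j k. (monomial_X (pos_part lam) - monomial_X (neg_part lam)) dvd t_poly E E' j k)
    \<and> (\<forall>\<beta>. (\<lambda>i. of_nat (\<beta> i)) \<in> Gamma h \<longrightarrow> lin_dep_Qx (S_vec E \<beta>) (S_vec E' \<beta>))"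
proof -
  note sol = assms(1) assms(2) and gcd = assms(4) and G = assms(5)
  obtain l where ll: "lam l \<noteq> 0" using lam_nonzero[OF gcd] by blast
  let ?B = "monomial_X (pos_part lam) - monomial_X (neg_part lam)"
  have part1: "?B dvd t_poly E E' j k" for j k
  proof (rule divisible[OF G gcd])
    fix w :: "'a \<Rightarrow> nat"
    let ?\<beta> = "\<lambda>i. wt w (h i)"
    have ks: "(\<Sum>j\<in>UNIV. Pw w b (h j) * S_vec E ?\<beta> j) = 0" for b
      using sol_key[OF sol(1), of w b] by (simp add: mult.commute)
    have ks': "(\<Sum>j\<in>UNIV. Pw w b (h j) * S_vec E' ?\<beta> j) = 0" for b
      using sol_key[OF sol(2), of w b] by (simp add: mult.commute)
    have "S_vec E ?\<beta> j * S_vec E' ?\<beta> k = S_vec E' ?\<beta> j * S_vec E ?\<beta> k"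
      by (rule minors[OF G ll ks ks'])
    then show "eval_beta ?\<beta> (t_poly E E' j k) = 0"
      by (simp add: t_poly_def ev_diff ev_mult S_vec_def)
  qed
  have part2: "lin_dep_Qx (S_vec E \<beta>) (S_vec E' \<beta>)" if b: "(\<lambda>i. of_nat (\<beta> i)) \<in> Gamma h" for \<beta>
  proof (rule lin_dep_from_minors)
    fix j k
    have "(\<Sum>i\<in>UNIV. rat_of_int (lam i) * rat_of_nat (\<beta> i)) = 0" using b G by simp
    then have "(of_int (\<Sum>i\<in>UNIV. lam i * int (\<beta> i)) :: rat) = 0" by simp
    then have s0: "(\<Sum>i\<in>UNIV. lam i * int (\<beta> i)) = 0" by (simp only: of_int_eq_0_iff)
    have "int (\<Sum>i\<in>UNIV. pos_part lam i * \<beta> i) - int (\<Sum>i\<in>UNIV. neg_part lam i * \<beta> i)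
        = (\<Sum>i\<in>UNIV. lam i * int (\<beta> i))"
      by (simp add: of_nat_sum sum_subtractf[symmetric] pos_part_def neg_part_def left_diff_distrib[symmetric])
         (rule sum.cong; simp; linarith)
    then have eqs: "(\<Sum>i\<in>UNIV. pos_part lam i * \<beta> i) = (\<Sum>i\<in>UNIV. neg_part lam i * \<beta> i)"
      using s0 by linarith
    have eB: "eval_beta \<beta> ?B = 0"
      by (simp add: ev_diff ev_monomial_X eqs)
    obtain q where "t_poly E E' j k = ?B * q" using part1[of j k] by (auto elim: dvdE)
    then have "eval_beta \<beta> (t_poly E E' j k) = 0" by (simp add: ev_mult eB)
    then show "S_vec E \<beta> j * S_vec E' \<beta> k = S_vec E' \<beta> j * S_vec E \<beta> k"
      by (simp add: t_poly_def ev_diff ev_mult S_vec_def)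
  qed
  show ?thesis using part1 part2 by blast
qed

end
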